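(* Call a positive integer $d$ admissible if either $d=1$, or $d$ can be written as $d=f\cdot\prod_{i=1}^{m}p_i^{2k_i}$ with $m\ge 1$, distinct primes $p_1<p_2<\dots<p_m$, integers $k_i\ge 0$, where $f=2$ if $p_1=2$ and $f=1$ if $p_1>2$, and where every $p_i$ divides $d$ (i.e. $k_i\ge 1$ for every $p_i>2$). For $d=1$ put $f=1$ and $s=1$; otherwise put $s=\prod_{i=1}^m p_i^{k_i}$ (so $d=f s^2$). Let $d$ be admissible and let $r$ be a positive integer such that (1) $r\ge \lceil \sqrt{f\,d/2}\,\rceil$, and (2) if $d>1$, then no prime divisor of $d$ divides $r$. Put $n=s\cdot r$ and $$a=2n+d=2sr+f s^2,\qquad b=2n+\frac{2n^2}{d}=2sr+\frac{2r^2}{f},\qquad c=b+d=2sr+\frac{2r^2}{f}+f s^2.$$ Then $(a,b,c)$ is an IDPT. Conversely, every IDPT $(a,b,c)$ arises in this way from some admissible $d$ and some positive integer $r$ satisfying (1) and (2) (namely with $d=c-b$).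
   Context: A Diophantine Pythagorean Triangle (DPT) is a triple $(a,b,c)$ of positive integers with $a<b<c$ and $a^2+b^2=c^2$. An Irreducible Diophantine Pythagorean Triangle (IDPT) is a DPT with $\gcd(a,b,c)=1$. $\lceil x\rceil$ denotes the smallest integer $\ge x$. *)

theory Defs
  imports Complex_Main "HOL-Computational_Algebra.Primes"
begin

definition dpt :: "nat \<Rightarrow> nat \<Rightarrow> nat \<Rightarrow> bool" where
  "dpt a b c \<longleftrightarrow> 0 < a \<and> a < b \<and> b < c \<and> a^2 + b^2 = c^2"

definition idpt :: "nat \<Rightarrow> nat \<Rightarrow> nat \<Rightarrow> bool" where
  "idpt a b c \<longleftrightarrow> dpt a b c \<and> gcd (gcd a b) c = 1"

definition admissible_rep :: "nat \<Rightarrow> nat \<Rightarrow> nat \<Rightarrow> bool" where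
  "admissible_rep d f s \<longleftrightarrow>
     (d = 1 \<and> f = 1 \<and> s = 1) \<or>
     (\<exists>ps ks :: nat list.
        length ps \<ge> 1 \<and> length ks = length ps \<and>
        sorted_wrt (<) ps \<and> (\<forall>p\<in>set ps. prime p) \<and>
        f = (if hd ps = 2 then 2 else 1) \<and>
        d = f * (\<Prod>i<length ps. (ps!i) ^ (2 * (ks!i))) \<and>
        (\<forall>i<length ps. ps!i dvd d) \<and>
        s = (\<Prod>i<length ps. (ps!i) ^ (ks!i)))"

definition admissible :: "nat \<Rightarrow> bool" where
  "admissible d \<longleftrightarrow> (\<exists>f s. admissible_rep d f s)"

end

theory Submission imports Defs "HOL-Computational_Algebra.Nth_Powers" begin

lemma ceil_cond: "(int r \<ge> \<lceil>sqrt (real x / 2)\<rceil>) \<longleftrightarrow> x \<le> 2 * r^2"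
proof -
  have "(int r \<ge> \<lceil>sqrt (real x / 2)\<rceil>) \<longleftrightarrow> sqrt (real x / 2) \<le> sqrt ((real r)^2)"
    by (simp add: ceiling_le_iff)
  also have "\<dots> \<longleftrightarrow> real x / 2 \<le> (real r)^2" by (rule real_sqrt_le_iff)
  also have "\<dots> \<longleftrightarrow> real x \<le> real (2 * r^2)" by (auto simp: field_simps)
  also have "\<dots> \<longleftrightarrow> x \<le> 2*r^2" by (rule of_nat_le_iff)
  finally show ?thesis .
qed

lemma coprimeI_primes:
  fixes x y :: nat
  assumes "\<And>p. prime p \<Longrightarrow> p dvd x \<Longrightarrow> p dvd y \<Longrightarrow> False"
  shows "coprime x y"
proof (rule ccontr)
  assume "\<not> coprime x y"
  then have "gcd x y \<noteq> 1" by (simp add: coprime_iff_gcd_eq_1)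
  then obtain p where "prime p" "p dvd gcd x y" using prime_factor_nat by blast
  then show False using assms by auto
qed

lemma prod_list_nth:
  assumes "distinct ps"
  shows "(\<Prod>i<length ps. g (ps!i)) = (\<Prod>p\<in>set ps. g p)"
proof -
  have "set ps = (!) ps ` {..<length ps}" by (auto simp: set_conv_nth)
  moreover have "inj_on ((!) ps) {..<length ps}" using assms by (intro inj_on_nth) auto
  ultimately show ?thesis by (simp add: prod.reindex)
qed

lemma prod_pf:
  fixes s :: nat
  assumes "s > 0" "finite P" "prime_factors s \<subseteq> P" "\<forall>p\<in>P. prime p"
  shows "(\<Prod>p\<in>P. p ^ multiplicity p s) = s"
proof -
  have "(\<Prod>p\<in>P. p ^ multiplicity p s) = (\<Prod>p\<in>prime_factors s. p ^ multiplicity p s)"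
  proof (intro prod.mono_neutral_right)
    show "\<forall>i\<in>P - prime_factors s. i ^ multiplicity i s = 1"
    proof
      fix i assume i: "i \<in> P - prime_factors s"
      then have "prime i" "\<not> i dvd s" using assms by (auto simp: in_prime_factors_iff)
      then show "i ^ multiplicity i s = 1" by (simp add: not_dvd_imp_multiplicity_0)
    qed
  qed (use assms in auto)
  also have "\<dots> = s" using assms by (simp add: prod_prime_factors)
  finally show ?thesis .
qed

lemma adm_gen:
  fixes s :: nat
  assumes "s > 0" "finite P" "prime_factors s \<subseteq> P" "P \<noteq> {}" "\<forall>p\<in>P. prime p"
    and f: "f = (if 2 \<in> P then 2 else 1)" and dv: "\<forall>p\<in>P. p dvd f * s^2"
  shows "admissible_rep (f * s^2) f s"
proof -
  define ps where "ps = sorted_list_of_set P"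
  define ks where "ks = map (\<lambda>p. multiplicity p s) ps"
  have sp: "set ps = P" "distinct ps" "sorted_wrt (<) ps" using assms(2) by (auto simp: ps_def)
  have ne: "ps \<noteq> []" using sp assms(4) by auto
  then have len: "length ps \<ge> 1" by (cases ps) auto
  have hd: "hd ps = Min P" using sorted_list_of_set_nonempty[OF assms(2,4)] ps_def by simp
  have hd2: "(hd ps = 2) = (2 \<in> P)"
  proof
    assume "hd ps = 2" then show "2 \<in> P" using Min_in[OF assms(2,4)] hd by simp
  next
    assume "2 \<in> P"
    then have "Min P \<le> 2" using assms(2) by simp
    moreover have "Min P \<ge> 2" using Min_in[OF assms(2,4)] assms(5) prime_ge_2_nat by blast
    ultimately show "hd ps = 2" using hd by simp
  qed
  have e1: "(\<Prod>i<length ps. (ps!i) ^ (ks!i)) = s"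
  proof -
    have "(\<Prod>i<length ps. (ps!i) ^ (ks!i)) = (\<Prod>i<length ps. (ps!i) ^ multiplicity (ps!i) s)"
      by (rule prod.cong) (auto simp: ks_def)
    also have "\<dots> = (\<Prod>p\<in>P. p ^ multiplicity p s)"
      using prod_list_nth[OF sp(2), of "\<lambda>p. p ^ multiplicity p s"] sp(1) by simp
    also have "\<dots> = s" using prod_pf assms by blast
    finally show ?thesis .
  qed
  have e2: "(\<Prod>i<length ps. (ps!i) ^ (2 * (ks!i))) = s^2"
  proof -
    have "s^2 = (\<Prod>i<length ps. ((ps!i) ^ (ks!i))^2)" by (simp add: e1[symmetric] prod_power_distrib)
    also have "\<dots> = (\<Prod>i<length ps. (ps!i) ^ (2 * (ks!i)))"
      by (rule prod.cong) (auto simp: power_mult[symmetric] mult.commute)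
    finally show ?thesis by simp
  qed
  show ?thesis unfolding admissible_rep_def
    apply (rule disjI2)
    apply (rule exI[of _ ps], rule exI[of _ ks])
    using len ne sp assms hd2 e1 e2 by (auto simp: ks_def)
qed

lemma adm_odd:
  fixes s :: nat
  assumes "odd s" "s > 0"
  shows "admissible_rep (s^2) 1 s"
proof (cases "s = 1")
  case True then show ?thesis by (simp add: admissible_rep_def)
next
  case False
  then obtain p where p: "prime p" "p dvd s" using prime_factor_nat by blast
  have "2 \<notin> prime_factors s" using assms(1) by (auto simp: in_prime_factors_iff)
  then have "admissible_rep (1 * s^2) 1 s"
    using p assms by (intro adm_gen) (auto simp: in_prime_factors_iff intro: dvd_mult2 simp: power2_eq_square)
  then show ?thesis by simp
qed

lemma adm_even:
  fixes s :: nat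
  assumes "s > 0"
  shows "admissible_rep (2 * s^2) 2 s"
  using assms by (intro adm_gen[where P = "insert 2 (prime_factors s)"])
    (auto simp: in_prime_factors_iff intro: dvd_mult2 simp: power2_eq_square)

lemma adm_facts:
  fixes d f s :: nat
  assumes "admissible_rep d f s"
  shows "s > 0 \<and> ((f = 1 \<and> d = s^2 \<and> odd d) \<or> (f = 2 \<and> d = 2 * s^2))"
  using assms unfolding admissible_rep_def
proof (elim disjE exE conjE)
  fix ps ks :: "nat list"
  assume len: "length ps \<ge> 1" "length ks = length ps" and so: "sorted_wrt (<) ps"
    and pr: "\<forall>p\<in>set ps. prime p" and f: "f = (if hd ps = 2 then 2 else 1)"
    and d: "d = f * (\<Prod>i<length ps. (ps!i) ^ (2 * (ks!i)))"
    and s: "s = (\<Prod>i<length ps. (ps!i) ^ (ks!i))"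
  have prn: "\<And>i. i < length ps \<Longrightarrow> prime (ps!i)" using pr by auto
  have ds: "d = f * s^2"
  proof -
    have "s^2 = (\<Prod>i<length ps. ((ps!i) ^ (ks!i))^2)" by (simp add: s prod_power_distrib)
    also have "\<dots> = (\<Prod>i<length ps. (ps!i) ^ (2 * (ks!i)))"
      by (rule prod.cong) (auto simp: power_mult[symmetric] mult.commute)
    finally show ?thesis using d by simp
  qed
  have spos: "s > 0" unfolding s using prn by (intro prod_pos) (auto simp: prime_gt_0_nat)
  show ?thesis
  proof (cases "hd ps = 2")
    case True then show ?thesis using f ds spos by simp
  next
    case False
    have "odd s"
    proof
      assume "even s"
      then obtain i where i: "i < length ps" "2 dvd (ps!i) ^ (ks!i)"
        unfolding s by (subst (asm) prime_dvd_prod_iff) auto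
      then have "2 dvd ps!i" using prime_dvd_power two_is_prime_nat by blast
      then have e: "ps!i = 2" using prn[OF i(1)] primes_dvd_imp_eq two_is_prime_nat by metis
      have "ps!0 \<le> ps!i"
        using so i(1) by (cases "i = 0") (auto dest: sorted_wrt_nth_less[of "(<)" ps 0 i])
      moreover have "ps!0 \<ge> 2" using prn[of 0] len prime_ge_2_nat by (metis One_nat_def less_eq_Suc_le)
      moreover have "hd ps = ps!0" using len by (cases ps) auto
      ultimately show False using e False by simp
    qed
    then show ?thesis using f False ds spos by simp
  qed
qed simp

lemma gcd3I:
  fixes a b c :: nat
  assumes "\<And>g. prime g \<Longrightarrow> g dvd a \<Longrightarrow> g dvd b \<Longrightarrow> g dvd c \<Longrightarrow> False"
  shows "gcd (gcd a b) c = 1"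
proof (rule ccontr)
  assume "gcd (gcd a b) c \<noteq> 1"
  then obtain p where "prime p" "p dvd gcd (gcd a b) c" using prime_factor_nat by blast
  then show False using assms by auto
qed

lemma fwd:
  fixes d f s r :: nat
  assumes adm: "admissible_rep d f s" and r: "r > 0"
    and ce: "int r \<ge> \<lceil>sqrt (real (f * d) / 2)\<rceil>"
    and pr: "d > 1 \<longrightarrow> (\<forall>p. prime p \<and> p dvd d \<longrightarrow> \<not> p dvd r)"
  shows "idpt (2 * (s * r) + d) (2 * (s * r) + 2 * (s * r)^2 div d) (2 * (s * r) + 2 * (s * r)^2 div d + d)"
proof -
  have fd: "f * d \<le> 2 * r^2" using ce ceil_cond by blast
  have F: "s > 0" "(f = 1 \<and> d = s^2 \<and> odd d) \<or> (f = 2 \<and> d = 2 * s^2)" using adm_facts[OF adm] by auto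
  from F(2) show ?thesis
  proof (elim disjE conjE)
    assume f1: "f = 1" and d: "d = s^2" and od: "odd d"
    have q: "2 * (s * r)^2 div d = 2 * r^2" using F(1) d
      by (simp add: power_mult_distrib)
    have lt: "s^2 < 2 * r^2"
    proof -
      have "s^2 \<noteq> 2 * r^2" proof assume "s^2 = 2 * r^2" then have "even d" using d by simp then show False using od by simp qed
      then show ?thesis using fd f1 d by simp
    qed
    show ?thesis unfolding q idpt_def dpt_def
    proof (intro conjI)
      show "0 < 2 * (s * r) + d" using d F(1) by simp
      show "2 * (s * r) + d < 2 * (s * r) + 2 * r^2" using lt d by simp
      show "2 * (s * r) + 2 * r\<^sup>2 < 2 * (s * r) + 2 * r\<^sup>2 + d" using d F(1) by simp
      show "(2 * (s * r) + d)\<^sup>2 + (2 * (s * r) + 2 * r\<^sup>2)\<^sup>2 = (2 * (s * r) + 2 * r\<^sup>2 + d)\<^sup>2"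
        unfolding d by (simp add: power2_eq_square algebra_simps)
      show "gcd (gcd (2 * (s * r) + d) (2 * (s * r) + 2 * r\<^sup>2)) (2 * (s * r) + 2 * r\<^sup>2 + d) = 1"
      proof (rule gcd3I)
        fix g :: nat assume g: "prime g" "g dvd 2 * (s * r) + d" "g dvd 2 * (s * r) + 2 * r\<^sup>2"
          "g dvd 2 * (s * r) + 2 * r\<^sup>2 + d"
        have gd: "g dvd d" using g(3,4) by (simp add: dvd_add_right_iff)
        then have d1: "d > 1" using g(1) prime_gt_1_nat by (metis F(1) d dvd_imp_le le_less_trans nat_dvd_1_iff_1 not_less_iff_gr_or_eq pos2 zero_less_power)
        have "g dvd s" using gd d g(1) prime_dvd_power by blast
        then have "g dvd 2 * (s * r)" by simp
        then have "g dvd 2 * r^2" using g(3) by (simp add: dvd_add_right_iff)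
        moreover have "g \<noteq> 2" using gd od by auto
        ultimately have "g dvd r^2" using g(1) by (metis prime_dvd_mult_iff primes_dvd_imp_eq two_is_prime_nat)
        then have "g dvd r" using g(1) prime_dvd_power by blast
        then show False using pr d1 g(1) gd by blast
      qed
    qed
  next
    assume f2: "f = 2" and d: "d = 2 * s^2"
    have q: "2 * (s * r)^2 div d = r^2" using F(1) d
      by (simp add: power_mult_distrib)
    have "s^2 > 0" using F(1) by simp
    then have d1: "d > 1" using d by linarith
    have lt: "2 * s^2 < r^2"
    proof -
      have "r^2 \<noteq> 2 * s^2"
      proof
        assume "r^2 = 2 * s^2"
        then have "2 dvd r" by (metis dvd_triv_left prime_dvd_power two_is_prime_nat)
        then show False using pr d1 d two_is_prime_nat by auto
      qed
      then show ?thesis using fd f2 d by simp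
    qed
    show ?thesis unfolding q idpt_def dpt_def
    proof (intro conjI)
      show "0 < 2 * (s * r) + d" using d F(1) by simp
      show "2 * (s * r) + d < 2 * (s * r) + r^2" using lt d by simp
      show "2 * (s * r) + r\<^sup>2 < 2 * (s * r) + r\<^sup>2 + d" using d F(1) by simp
      show "(2 * (s * r) + d)\<^sup>2 + (2 * (s * r) + r\<^sup>2)\<^sup>2 = (2 * (s * r) + r\<^sup>2 + d)\<^sup>2"
        unfolding d by (simp add: power2_eq_square algebra_simps)
      show "gcd (gcd (2 * (s * r) + d) (2 * (s * r) + r\<^sup>2)) (2 * (s * r) + r\<^sup>2 + d) = 1"
      proof (rule gcd3I)
        fix g :: nat assume g: "prime g" "g dvd 2 * (s * r) + d" "g dvd 2 * (s * r) + r\<^sup>2"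
          "g dvd 2 * (s * r) + r\<^sup>2 + d"
        have gd: "g dvd d" using g(3,4) by (simp add: dvd_add_right_iff)
        have "g dvd 2 \<or> g dvd s^2" using gd d g(1) prime_dvd_mult_iff by blast
        then have "g dvd 2 \<or> g dvd s" using g(1) prime_dvd_power by blast
        then have "g dvd 2 * (s * r)" by auto
        then have "g dvd r^2" using g(3) by (simp add: dvd_add_right_iff)
        then have "g dvd r" using g(1) prime_dvd_power by blast
        then show False using pr d1 g(1) gd by blast
      qed
    qed
  qed
qed

lemma sq_inj: "(x::nat)^2 = y^2 \<Longrightarrow> x = y"
  by (simp add: power_eq_iff_eq_base)

lemma conv:
  fixes a b c :: nat
  assumes "idpt a b c"
  shows "\<exists>f s r :: nat.
               admissible_rep (c - b) f s \<and> r > 0 \<and>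
               int r \<ge> \<lceil>sqrt (real (f * (c - b)) / 2)\<rceil> \<and>
               (c - b > 1 \<longrightarrow> (\<forall>p. prime p \<and> p dvd (c - b) \<longrightarrow> \<not> p dvd r)) \<and>
               a = 2 * (s * r) + (c - b) \<and>
               b = 2 * (s * r) + 2 * (s * r)^2 div (c - b) \<and>
               c = b + (c - b)"
proof -
  have a0: "0 < a" and ab: "a < b" and bc: "b < c" and py: "a^2 + b^2 = c^2"
    and g1: "gcd (gcd a b) c = 1" using assms by (auto simp: idpt_def dpt_def)
  have prim: "False" if "prime g" "g dvd a" "g dvd b" "g dvd c" for g
  proof -
    have "g dvd gcd (gcd a b) c" using that by simp
    then show False using g1 that(1) by simp
  qed
  define d where "d = c - b"
  have cbd: "c = b + d" and d0: "d > 0" using bc by (auto simp: d_def)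
  have eq: "a^2 = d * (d + 2 * b)"
    using py unfolding cbd by (simp add: power2_eq_square algebra_simps)
  have cop_bd: False if "prime p" "p dvd b" "p dvd d" for p
  proof -
    have "p dvd c" using that cbd by simp
    moreover have "p dvd a^2" using eq that by simp
    then have "p dvd a" using that(1) prime_dvd_power by blast
    ultimately show False using prim that by blast
  qed
  have fin: "c = b + (c - b)" using bc by simp
  show ?thesis
  proof (cases "odd d")
    case True
    have cop: "coprime d (d + 2 * b)"
    proof (rule coprimeI_primes)
      fix p :: nat assume p: "prime p" "p dvd d" "p dvd d + 2 * b"
      then have "p dvd 2 * b" by (simp add: dvd_add_right_iff)
      moreover have "p \<noteq> 2" using p True by auto
      ultimately have "p dvd b" using p(1) by (metis prime_dvd_mult_iff primes_dvd_imp_eq two_is_prime_nat)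
      then show False using cop_bd p by blast
    qed
    have "is_nth_power 2 (d * (d + 2 * b))" using eq by (metis is_nth_power_def)
    then have "is_nth_power 2 d" "is_nth_power 2 (d + 2 * b)"
      using is_nth_power_mult_coprime_natD[OF cop] d0 by auto
    then obtain s t where s: "d = s^2" and t: "d + 2 * b = t^2" by (auto simp: is_nth_power_def)
    have "a^2 = s^2 * t^2" unfolding eq by (simp only: t) (simp only: s)
    then have ast: "a = s * t" using sq_inj[of a "s*t"] by (simp add: power_mult_distrib)
    have cst: "coprime s t" using cop s t by simp
    have s0: "s > 0" using s d0 by (cases s) auto
    have "d < a"
    proof -
      have "d * d < d * (d + 2 * b)" using d0 ab by simp
      then have "d^2 < a^2" using eq by (simp add: power2_eq_square)
      then show ?thesis using power_less_imp_less_base by blast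
    qed
    then have "s * s < s * t" using s ast by (simp add: power2_eq_square)
    then have st: "s < t" by simp
    have os: "odd s" using True s by simp
    have "odd (t^2)" unfolding t[symmetric] using True by simp
    then have ot: "odd t" by simp
    obtain v where v: "s = 2 * v + 1" using os oddE by blast
    obtain u where u: "t = 2 * u + 1" using ot oddE by blast
    have tr: "t = s + 2 * (u - v)" using u v st by simp
    define r where "r = u - v"
    then have tr: "t = s + 2 * r" using tr by simp
    have bv: "b = 2 * (s * r) + 2 * r^2" using t s tr by (simp add: power2_eq_square algebra_simps)
    have av: "a = 2 * (s * r) + d" using ast s tr by (simp add: power2_eq_square algebra_simps)
    have q: "2 * (s * r)^2 div d = 2 * r^2" using s0 s by (simp add: power_mult_distrib)
    show ?thesis
    proof (rule exI[of _ "1::nat"], rule exI[of _ s], rule exI[of _ r], intro conjI)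
      show "admissible_rep (c - b) 1 s" using adm_odd[OF os s0] s d_def by simp
      show "r > 0" using st tr by simp
      have "1 * (c - b) \<le> 2 * r^2" using ab av bv s d_def by simp
      then show "int r \<ge> \<lceil>sqrt (real (1 * (c - b)) / 2)\<rceil>" using ceil_cond by blast
      show "c - b > 1 \<longrightarrow> (\<forall>p. prime p \<and> p dvd (c - b) \<longrightarrow> \<not> p dvd r)"
      proof (intro impI allI notI)
        fix p assume p: "prime p \<and> p dvd (c - b)" "p dvd r"
        then have "p dvd s^2" using s d_def by simp
        then have "p dvd s" using p prime_dvd_power by blast
        moreover then have "p dvd t" using tr p by simp
        ultimately have "p = 1" using cst coprime_common_divisor_nat by blast
        then show False using p by simp
      qed
      show "a = 2 * (s * r) + (c - b)" using av d_def by simp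
      show "b = 2 * (s * r) + 2 * (s * r)^2 div (c - b)" using bv q d_def by simp
    qed (rule fin)
  next
    case False
    then obtain e where de: "d = 2 * e" by blast
    have e0: "e > 0" using de d0 by simp
    have eq2: "a^2 = 4 * (e * (e + b))" using eq de by (simp add: algebra_simps)
    then have "even (a^2)" by simp
    then obtain a' where aa: "a = 2 * a'" by auto
    have eq3: "a'^2 = e * (e + b)" using eq2 aa by (simp add: power_mult_distrib)
    have cop: "coprime e (e + b)"
    proof (rule coprimeI_primes)
      fix p :: nat assume p: "prime p" "p dvd e" "p dvd e + b"
      then have "p dvd b" by (simp add: dvd_add_right_iff)
      moreover have "p dvd d" using p de by simp
      ultimately show False using cop_bd p by blast
    qed
    have "is_nth_power 2 (e * (e + b))" using eq3 by (metis is_nth_power_def)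
    then have "is_nth_power 2 e" "is_nth_power 2 (e + b)"
      using is_nth_power_mult_coprime_natD[OF cop] e0 by auto
    then obtain s t where s: "e = s^2" and t: "e + b = t^2" by (auto simp: is_nth_power_def)
    have "a'^2 = s^2 * t^2" unfolding eq3 by (simp only: t) (simp only: s)
    then have ast: "a' = s * t" using sq_inj[of "a'" "s*t"] by (simp add: power_mult_distrib)
    have cst: "coprime s t" using cop s t by simp
    have s0: "s > 0" using s e0 by (cases s) auto
    have "s^2 < t^2" using s t ab by linarith
    then have st: "s < t" using power_less_imp_less_base by blast
    obtain r where tr: "t = s + r" using st less_imp_add_positive by blast
    have bv: "b = 2 * (s * r) + r^2" using t s tr by (simp add: power2_eq_square algebra_simps)
    have dv: "d = 2 * s^2" using de s by simp
    have av: "a = 2 * (s * r) + d" using aa ast dv tr by (simp add: power2_eq_square algebra_simps)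
    have q: "2 * (s * r)^2 div d = r^2" using s0 dv by (simp add: power_mult_distrib)
    show ?thesis
    proof (rule exI[of _ "2::nat"], rule exI[of _ s], rule exI[of _ r], intro conjI)
      show "admissible_rep (c - b) 2 s" using adm_even[OF s0] dv d_def by simp
      show "r > 0" using st tr by simp
      have "2 * (c - b) \<le> 2 * r^2" using ab av bv dv d_def by simp
      then show "int r \<ge> \<lceil>sqrt (real (2 * (c - b)) / 2)\<rceil>" using ceil_cond by blast
      show "c - b > 1 \<longrightarrow> (\<forall>p. prime p \<and> p dvd (c - b) \<longrightarrow> \<not> p dvd r)"
      proof (intro impI allI notI)
        fix p assume p: "prime p \<and> p dvd (c - b)" "p dvd r"
        have "p dvd 2 * s^2" using p dv d_def by simp
        then have "p dvd 2 \<or> p dvd s^2" using p prime_dvd_mult_iff by blast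
        moreover have "p dvd 2 \<Longrightarrow> p = 2" using p primes_dvd_imp_eq two_is_prime_nat by blast
        moreover have "p dvd s^2 \<Longrightarrow> p dvd s" using p prime_dvd_power by blast
        ultimately have "p = 2 \<or> p dvd s" by blast
        then show False
        proof
          assume p2: "p = 2"
          have "2 dvd b" using bv p p2 by simp
          moreover have "2 dvd d" using dv by simp
          moreover have "2 dvd a" using aa by simp
          ultimately show False using prim[of 2] cbd by simp
        next
          assume "p dvd s"
          moreover then have "p dvd t" using tr p by simp
          ultimately have "p = 1" using cst coprime_common_divisor_nat by blast
          then show False using p by simp
        qed
      qed
      show "a = 2 * (s * r) + (c - b)" using av d_def by simp
      show "b = 2 * (s * r) + 2 * (s * r)^2 div (c - b)" using bv q d_def by simp
    qed (rule fin)
  qed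
qed

theorem theorem5:
  shows "(\<forall>d f s r :: nat.
            admissible_rep d f s \<and> r > 0 \<and>
            int r \<ge> \<lceil>sqrt (real (f * d) / 2)\<rceil> \<and>
            (d > 1 \<longrightarrow> (\<forall>p. prime p \<and> p dvd d \<longrightarrow> \<not> p dvd r)) \<longrightarrow>
            idpt (2 * (s * r) + d)
                 (2 * (s * r) + 2 * (s * r)^2 div d)
                 (2 * (s * r) + 2 * (s * r)^2 div d + d))
       \<and>
         (\<forall>a b c :: nat. idpt a b c \<longrightarrow>
            (\<exists>f s r :: nat.
               admissible_rep (c - b) f s \<and> r > 0 \<and>
               int r \<ge> \<lceil>sqrt (real (f * (c - b)) / 2)\<rceil> \<and>
               (c - b > 1 \<longrightarrow> (\<forall>p. prime p \<and> p dvd (c - b) \<longrightarrow> \<not> p dvd r)) \<and>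
               a = 2 * (s * r) + (c - b) \<and>
               b = 2 * (s * r) + 2 * (s * r)^2 div (c - b) \<and>
               c = b + (c - b)))"
  using fwd conv by blast

end
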